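(* Let $n\ge 7$ and let $G$ be a connected simple graph with $n$ vertices and $n+1$ edges that contains two vertex-disjoint triangles $v_1v_2v_3$ and $w_1w_2w_3$ joined by a path $v_3uw_1$ of length $2$ (so that these two triangles are the cycles of $G$ and this path connects them). Then $\operatorname{avm}(G)>\operatorname{avm}(T_n^1(3,3))$.
   Context: $\operatorname{avm}(G)$ is the average of $|M|$ over all maximal matchings $M$ of $G$ (a matching is maximal if not properly contained in another matching). $T_n^1(3,3)$ is the graph obtained from two vertex-disjoint triangles $a_1a_2a_3$ and $b_1b_2b_3$ joined by the edge $a_3b_1$ by attaching $n-6$ pendant edges (new leaves) to $a_3$. *)

theory Defs
  imports Complex_Main
begin

definition simple_graph :: "'a set \<Rightarrow> 'a set set \<Rightarrow> bool" where
  "simple_graph V E \<longleftrightarrow> finite V \<and>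
     (\<forall>e\<in>E. \<exists>x y. x \<noteq> y \<and> x \<in> V \<and> y \<in> V \<and> e = {x, y})"

definition adj_rel :: "'a set set \<Rightarrow> ('a \<times> 'a) set" where
  "adj_rel E = {(x, y). {x, y} \<in> E}"

definition connected_graph :: "'a set \<Rightarrow> 'a set set \<Rightarrow> bool" where
  "connected_graph V E \<longleftrightarrow> (\<forall>x\<in>V. \<forall>y\<in>V. (x, y) \<in> (adj_rel E)\<^sup>*)"

definition matching :: "'a set set \<Rightarrow> 'a set set \<Rightarrow> bool" where
  "matching E M \<longleftrightarrow> M \<subseteq> E \<and> (\<forall>e1\<in>M. \<forall>e2\<in>M. e1 \<noteq> e2 \<longrightarrow> e1 \<inter> e2 = {})"

definition maximal_matching :: "'a set set \<Rightarrow> 'a set set \<Rightarrow> bool" where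
  "maximal_matching E M \<longleftrightarrow> matching E M \<and>
     (\<forall>M'. matching E M' \<and> M \<subseteq> M' \<longrightarrow> M' = M)"

definition maximal_matchings :: "'a set set \<Rightarrow> 'a set set set" where
  "maximal_matchings E = {M. maximal_matching E M}"

definition avm :: "'a set set \<Rightarrow> real" where
  "avm E = (\<Sum>M\<in>maximal_matchings E. real (card M)) / real (card (maximal_matchings E))"

text \<open>The graph T_n^1(3,3) on vertices 0..n-1: triangles a1 a2 a3 = 0 1 2 and
  b1 b2 b3 = 3 4 5, the bridge a3 b1 = {2,3}, and pendant edges {2,k} for 6 <= k < n.\<close>
definition T1_33_vertices :: "nat \<Rightarrow> nat set" where
  "T1_33_vertices n = {0..<n}"

definition T1_33_edges :: "nat \<Rightarrow> nat set set" where
  "T1_33_edges n = {{0,1}, {1,2}, {0,2}, {3,4}, {4,5}, {3,5}, {2,3}} \<union> {{2, k} | k. 6 \<le> k \<and> k < n}"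

end

theory Submission
  imports Defs
begin

lemma mm_crit:
  assumes "\<forall>e\<in>E. e \<noteq> {}"
  shows "maximal_matching E M \<longleftrightarrow> matching E M \<and> (\<forall>e\<in>E. \<exists>f\<in>M. e \<inter> f \<noteq> {})"
proof
  assume mm: "maximal_matching E M"
  hence m: "matching E M" by (simp add: maximal_matching_def)
  show "matching E M \<and> (\<forall>e\<in>E. \<exists>f\<in>M. e \<inter> f \<noteq> {})"
  proof (intro conjI m ballI, rule ccontr)
    fix e assume e: "e \<in> E" and n: "\<not> (\<exists>f\<in>M. e \<inter> f \<noteq> {})"
    have "e \<notin> M" using n e assms by auto
    have "matching E (insert e M)" using m e n unfolding matching_def by blast
    hence "insert e M = M" using mm unfolding maximal_matching_def by blast
    thus False using \<open>e \<notin> M\<close> by blast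
  qed
next
  assume h: "matching E M \<and> (\<forall>e\<in>E. \<exists>f\<in>M. e \<inter> f \<noteq> {})"
  show "maximal_matching E M" unfolding maximal_matching_def
  proof (intro conjI allI impI)
    show "matching E M" using h by simp
    fix M' assume a: "matching E M' \<and> M \<subseteq> M'"
    show "M' = M"
    proof
      show "M' \<subseteq> M"
      proof
        fix e assume "e \<in> M'"
        hence "e \<in> E" using a unfolding matching_def by blast
        then obtain f where f: "f \<in> M" "e \<inter> f \<noteq> {}" using h by blast
        hence "f \<in> M'" using a by blast
        hence "e = f" using f \<open>e \<in> M'\<close> a unfolding matching_def by blast
        thus "e \<in> M" using f by simp
      qed
    qed (use a in blast)
  qed
qed

lemma card_union_matching:
  assumes "matching E M" "\<forall>e\<in>E. card e = 2" "finite M"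
  shows "card (\<Union>M) = 2 * card M"
proof -
  have fin: "finite A" if "A \<in> M" for A
  proof -
    have "card A = 2" using that assms unfolding matching_def by blast
    thus "finite A" by (intro card_ge_0_finite) simp
  qed
  have "card (\<Union>M) = sum card M"
    apply (rule card_Union_disjoint)
    using assms fin unfolding matching_def pairwise_def disjnt_def
     by blast+
  also have "\<dots> = sum (\<lambda>_. 2) M" using assms unfolding matching_def
    by (intro sum.cong) auto
  finally show ?thesis by simp
qed

definition F7 :: "nat set set" where "F7 = {{0,1}, {1,2}, {0,2}, {3,4}, {4,5}, {3,5}, {2,3}}"

lemma T_eq: "T1_33_edges n = F7 \<union> (\<lambda>k. {2,k}) ` {6..<n}"
proof -
  have aux: "{{2,k}|k. 6 \<le> k \<and> k < (n::nat)} = (\<lambda>k. {2::nat,k}) ` {6..<n}" by auto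
  show ?thesis unfolding T1_33_edges_def F7_def aux ..
qed

lemma T_mem: "e \<in> T1_33_edges n \<longleftrightarrow> e = {0,1} \<or> e = {1,2} \<or> e = {0,2} \<or> e = {3,4} \<or> e = {4,5} \<or> e = {3,5} \<or> e = {2,3} \<or> (\<exists>k. 6 \<le> k \<and> k < n \<and> e = {2,k})"
  unfolding T_eq F7_def Un_iff insert_iff empty_iff image_iff atLeastLessThan_iff Bex_def
  by (simp only: simp_thms disj_assoc conj_assoc)

lemma T_pend: "6 \<le> k \<Longrightarrow> k < n \<Longrightarrow> {2,k} \<in> T1_33_edges n"
  unfolding T_eq by simp

lemma T_F7: "e \<in> F7 \<Longrightarrow> e \<in> T1_33_edges n"
  unfolding T_eq by simp

definition Tb :: "nat set set" where "Tb = {{3,4},{4,5},{3,5}}"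

lemma Tb_F7: "t \<in> Tb \<Longrightarrow> t \<in> F7"
  unfolding Tb_def F7_def by auto

lemma Tb_meet: "g \<in> Tb \<Longrightarrow> h \<in> Tb \<Longrightarrow> g \<inter> h = {} \<Longrightarrow> False"
  unfolding Tb_def by (elim insertE emptyE) simp_all

lemma T_card2: "\<forall>e\<in>T1_33_edges n. card e = 2"
proof
  fix e assume "e \<in> T1_33_edges n"
  thus "card e = 2" unfolding T_mem by (elim disjE exE conjE) simp_all
qed

lemma T_ne: "\<forall>e\<in>T1_33_edges n. e \<noteq> {}"
  using T_card2 by fastforce

lemma cover_Union: "(\<forall>e\<in>E. \<exists>f\<in>M. e \<inter> f \<noteq> {}) \<longleftrightarrow> (\<forall>e\<in>E. e \<inter> \<Union>M \<noteq> {})"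
  by blast

lemma T_crit: "maximal_matching (T1_33_edges n) M \<longleftrightarrow>
   M \<subseteq> T1_33_edges n \<and> (\<forall>e1\<in>M. \<forall>e2\<in>M. e1 \<noteq> e2 \<longrightarrow> e1 \<inter> e2 = {}) \<and>
      (\<forall>e\<in>T1_33_edges n. e \<inter> \<Union>M \<noteq> {})"
  unfolding mm_crit[OF T_ne] matching_def cover_Union by (simp only: conj_assoc)

definition P1 :: "nat set set set" where "P1 = (\<lambda>t. {{0,2},t}) ` Tb"
definition P2 :: "nat set set set" where "P2 = (\<lambda>t. {{1,2},t}) ` Tb"
definition P3 :: "nat set set set" where "P3 = {{{2,3},{0,1},{4,5}}}"
definition P4 :: "nat \<Rightarrow> nat set set set" where
  "P4 n = (\<lambda>(k,t). {{2,k},{0,1},t}) ` ({6..<n} \<times> Tb)"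

lemma T_P1: "t \<in> Tb \<Longrightarrow> maximal_matching (T1_33_edges n) {{0,2},t}"
  unfolding T_crit
proof (intro conjI ballI impI)
  assume t: "t \<in> Tb"
  show "{{0,2},t} \<subseteq> T1_33_edges n" using t T_F7 Tb_F7 unfolding F7_def by simp
  show "e1 \<inter> e2 = {}" if "e1 \<in> {{0,2},t}" "e2 \<in> {{0,2},t}" "e1 \<noteq> e2" for e1 e2 :: "nat set"
    using that t unfolding Tb_def by (elim insertE emptyE) simp_all
  show "e \<inter> \<Union>{{0,2},t} \<noteq> {}" if "e \<in> T1_33_edges n" for e
    using that t unfolding T_mem Tb_def by (elim disjE exE conjE insertE emptyE) simp_all
qed

lemma T_P2: "t \<in> Tb \<Longrightarrow> maximal_matching (T1_33_edges n) {{1,2},t}"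
  unfolding T_crit
proof (intro conjI ballI impI)
  assume t: "t \<in> Tb"
  show "{{1,2},t} \<subseteq> T1_33_edges n" using t T_F7 Tb_F7 unfolding F7_def by simp
  show "e1 \<inter> e2 = {}" if "e1 \<in> {{1,2},t}" "e2 \<in> {{1,2},t}" "e1 \<noteq> e2" for e1 e2 :: "nat set"
    using that t unfolding Tb_def by (elim insertE emptyE) simp_all
  show "e \<inter> \<Union>{{1,2},t} \<noteq> {}" if "e \<in> T1_33_edges n" for e
    using that t unfolding T_mem Tb_def by (elim disjE exE conjE insertE emptyE) simp_all
qed

lemma T_P3: "maximal_matching (T1_33_edges n) {{2,3},{0,1},{4,5}}"
  unfolding T_crit
proof (intro conjI ballI impI)
  show "{{2,3},{0,1},{4,5}} \<subseteq> T1_33_edges n" using T_F7 unfolding F7_def by simp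
  show "e1 \<inter> e2 = {}" if "e1 \<in> {{2,3},{0,1},{4,5}}" "e2 \<in> {{2,3},{0,1},{4,5}}" "e1 \<noteq> e2" for e1 e2 :: "nat set"
    using that by (elim insertE emptyE) simp_all
  show "e \<inter> \<Union>{{2,3},{0,1},{4,5}} \<noteq> {}" if "e \<in> T1_33_edges n" for e
    using that unfolding T_mem by (elim disjE exE conjE) simp_all
qed

lemma T_P4: "6 \<le> k \<Longrightarrow> k < n \<Longrightarrow> t \<in> Tb \<Longrightarrow> maximal_matching (T1_33_edges n) {{2,k},{0,1},t}"
  unfolding T_crit
proof (intro conjI ballI impI)
  assume k: "6 \<le> k" "k < n" and t: "t \<in> Tb"
  show "{{2,k},{0,1},t} \<subseteq> T1_33_edges n" using t k T_F7 Tb_F7 T_pend unfolding F7_def by simp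
  show "e1 \<inter> e2 = {}" if "e1 \<in> {{2,k},{0,1},t}" "e2 \<in> {{2,k},{0,1},t}" "e1 \<noteq> e2" for e1 e2 :: "nat set"
    using that t k unfolding Tb_def by (elim insertE emptyE) simp_all
  show "e \<inter> \<Union>{{2,k},{0,1},t} \<noteq> {}" if "e \<in> T1_33_edges n" for e
    using that t unfolding T_mem Tb_def by (elim disjE exE conjE insertE emptyE) simp_all
qed

lemma L6: "g \<in> T1_33_edges n \<Longrightarrow> 6 \<in> g \<Longrightarrow> 2 \<in> g"
  unfolding T_mem by (elim disjE exE conjE) simp_all

lemma L2: "g \<in> T1_33_edges n \<Longrightarrow> 2 \<in> g \<Longrightarrow> g = {1,2} \<or> g = {0,2} \<or> g = {2,3} \<or> (\<exists>k. 6 \<le> k \<and> k < n \<and> g = {2,k})"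
  unfolding T_mem by (elim disjE exE conjE) force+

lemma L02: "g \<in> T1_33_edges n \<Longrightarrow> g \<inter> {0,2} = {} \<Longrightarrow> g \<in> Tb"
  unfolding T_mem Tb_def by (elim disjE exE conjE) simp_all

lemma L12: "g \<in> T1_33_edges n \<Longrightarrow> g \<inter> {1,2} = {} \<Longrightarrow> g \<in> Tb"
  unfolding T_mem Tb_def by (elim disjE exE conjE) simp_all

lemma L23: "g \<in> T1_33_edges n \<Longrightarrow> g \<inter> {2,3} = {} \<Longrightarrow> g = {0,1} \<or> g = {4,5}"
  unfolding T_mem by (elim disjE exE conjE) simp_all

lemma L2k: "6 \<le> k \<Longrightarrow> g \<in> T1_33_edges n \<Longrightarrow> g \<inter> {2,k} = {} \<Longrightarrow> g = {0,1} \<or> g \<in> Tb"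
  unfolding T_mem Tb_def by (elim disjE exE conjE) simp_all

lemma Tb01: "t \<in> Tb \<Longrightarrow> t \<inter> {0,1} = {}"
  unfolding Tb_def by (elim insertE emptyE) simp_all

lemma Tb34: "t \<in> Tb \<Longrightarrow> t \<inter> {0,2} = {}" "t \<in> Tb \<Longrightarrow> t \<inter> {1,2} = {}"
  unfolding Tb_def by (elim insertE emptyE; simp)+

lemma T_inf:
  assumes mm: "maximal_matching (T1_33_edges n) M" and n: "6 < n"
  shows "M \<in> P1 \<union> P2 \<union> P3 \<union> P4 n"
proof -
  let ?E = "T1_33_edges n"
  have sub: "M \<subseteq> ?E" and dis: "\<And>g h. g \<in> M \<Longrightarrow> h \<in> M \<Longrightarrow> g \<noteq> h \<Longrightarrow> g \<inter> h = {}"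
    and cov: "\<And>c. c \<in> ?E \<Longrightarrow> \<exists>h\<in>M. c \<inter> h \<noteq> {}"
    using mm unfolding T_crit by blast+
  have uniq: "g = h" if "g \<in> M" "h \<in> M" "g \<in> Tb" "h \<in> Tb" for g h
    using dis[OF that(1,2)] Tb_meet[OF that(3,4)] by blast
  have "{2,6} \<in> ?E" using n by (intro T_pend) auto
  then obtain f where f: "f \<in> M" "{2,6} \<inter> f \<noteq> {}" using cov by blast
  have "2 \<in> f"
  proof (cases "2 \<in> f")
    case False
    hence "6 \<in> f" using f(2) by auto
    thus ?thesis using L6 f(1) sub by blast
  qed
  then obtain e where e: "e \<in> M" "2 \<in> e" using f(1) by blast
  have oth: "g \<inter> e = {}" if "g \<in> M" "g \<noteq> e" for g using dis[OF that(1) e(1) that(2)] .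
  have "e \<in> ?E" using e sub by blast
  from L2[OF this e(2)] consider "e = {1,2}" | "e = {0,2}" | "e = {2,3}" | k where "6 \<le> k" "k < n" "e = {2,k}"
    by blast
  thus ?thesis
  proof cases
    case 1
    have "{3,4} \<in> ?E" by (rule T_F7) (simp add: F7_def)
    then obtain h where h: "h \<in> M" "{3,4} \<inter> h \<noteq> {}" using cov by blast
    have "h \<noteq> e" using h(2) 1 by auto
    hence hT: "h \<in> Tb" using L12[of h n] oth[OF h(1)] h(1) sub 1 by blast
    have "M = {e,h}"
    proof
      show "M \<subseteq> {e,h}"
      proof
        fix g assume g: "g \<in> M"
        show "g \<in> {e,h}"
        proof (cases "g = e")
          case False
          hence "g \<in> Tb" using L12[of g n] oth[OF g] g sub 1 by blast
          thus ?thesis using uniq[OF g h(1) _ hT] by blast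
        qed simp
      qed
    qed (use e h in blast)
    thus ?thesis unfolding P2_def using 1 hT by blast
  next
    case 2
    have "{3,4} \<in> ?E" by (rule T_F7) (simp add: F7_def)
    then obtain h where h: "h \<in> M" "{3,4} \<inter> h \<noteq> {}" using cov by blast
    have "h \<noteq> e" using h(2) 2 by auto
    hence hT: "h \<in> Tb" using L02[of h n] oth[OF h(1)] h(1) sub 2 by blast
    have "M = {e,h}"
    proof
      show "M \<subseteq> {e,h}"
      proof
        fix g assume g: "g \<in> M"
        show "g \<in> {e,h}"
        proof (cases "g = e")
          case False
          hence "g \<in> Tb" using L02[of g n] oth[OF g] g sub 2 by blast
          thus ?thesis using uniq[OF g h(1) _ hT] by blast
        qed simp
      qed
    qed (use e h in blast)
    thus ?thesis unfolding P1_def using 2 hT by blast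
  next
    case 3
    have "{0,1} \<in> ?E" by (rule T_F7) (simp add: F7_def)
    then obtain h where h: "h \<in> M" "{0,1} \<inter> h \<noteq> {}" using cov by blast
    have "h \<noteq> e" using h(2) 3 by auto
    hence "h = {0,1} \<or> h = {4,5}" using L23[of h n] oth[OF h(1)] h(1) sub 3 by blast
    hence h01: "h = {0,1}" using h(2) by auto
    have "{4,5} \<in> ?E" by (rule T_F7) (simp add: F7_def)
    then obtain h' where h': "h' \<in> M" "{4,5} \<inter> h' \<noteq> {}" using cov by blast
    have "h' \<noteq> e" using h'(2) 3 by auto
    hence "h' = {0,1} \<or> h' = {4,5}" using L23[of h' n] oth[OF h'(1)] h'(1) sub 3 by blast
    hence h45: "h' = {4,5}" using h'(2) by auto
    have "M = {e,h,h'}"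
    proof
      show "M \<subseteq> {e,h,h'}"
      proof
        fix g assume g: "g \<in> M"
        show "g \<in> {e,h,h'}"
        proof (cases "g = e")
          case False
          hence "g = {0,1} \<or> g = {4,5}" using L23[of g n] oth[OF g] g sub 3 by blast
          thus ?thesis using h01 h45 by blast
        qed simp
      qed
    qed (use e h h' in blast)
    thus ?thesis unfolding P3_def using 3 h01 h45 by blast
  next
    case 4
    have "{0,1} \<in> ?E" by (rule T_F7) (simp add: F7_def)
    then obtain h where h: "h \<in> M" "{0,1} \<inter> h \<noteq> {}" using cov by blast
    have "h \<noteq> e" using h(2) 4 by auto
    hence "h = {0,1} \<or> h \<in> Tb" using L2k[of k h n] oth[OF h(1)] h(1) sub 4 by blast
    hence h01: "h = {0,1}" using h(2) Tb01 by blast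
    have "{3,4} \<in> ?E" by (rule T_F7) (simp add: F7_def)
    then obtain h' where h': "h' \<in> M" "{3,4} \<inter> h' \<noteq> {}" using cov by blast
    have "h' \<noteq> e" using h'(2) 4 by auto
    hence "h' = {0,1} \<or> h' \<in> Tb" using L2k[of k h' n] oth[OF h'(1)] h'(1) sub 4 by blast
    hence hT: "h' \<in> Tb" using h'(2) by auto
    have "M = {e,h,h'}"
    proof
      show "M \<subseteq> {e,h,h'}"
      proof
        fix g assume g: "g \<in> M"
        show "g \<in> {e,h,h'}"
        proof (cases "g = e")
          case False
          hence "g = {0,1} \<or> g \<in> Tb" using L2k[of k g n] oth[OF g] g sub 4 by blast
          thus ?thesis using h01 uniq[OF g h'(1) _ hT] by blast
        qed simp
      qed
    qed (use e h h' in blast)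
    hence "M = (\<lambda>(k,t). {{2,k},{0,1},t}) (k,h')" using h01 4 by simp
    moreover have "(k,h') \<in> {6..<n} \<times> Tb" using 4 hT by simp
    ultimately show ?thesis unfolding P4_def by blast
  qed
qed

lemma MMT: "6 < n \<Longrightarrow> maximal_matchings (T1_33_edges n) = P1 \<union> P2 \<union> P3 \<union> P4 n"
proof
  assume n: "6 < n"
  show "maximal_matchings (T1_33_edges n) \<subseteq> P1 \<union> P2 \<union> P3 \<union> P4 n"
    using T_inf[OF _ n] unfolding maximal_matchings_def by blast
  show "P1 \<union> P2 \<union> P3 \<union> P4 n \<subseteq> maximal_matchings (T1_33_edges n)"
    unfolding maximal_matchings_def P1_def P2_def P3_def P4_def
    using T_P1 T_P2 T_P3 T_P4 by auto
qed

lemma card_Tb: "card Tb = 3"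
  unfolding Tb_def by (simp add: doubleton_eq_iff)

lemma inj_P1: "inj_on (\<lambda>t. {{0::nat,2},t}) Tb"
proof (rule inj_on_inverseI)
  fix t assume "t \<in> Tb"
  thus "\<Union>{{0::nat,2},t} - {0,2} = t" unfolding Tb_def by (elim insertE emptyE) auto
qed

lemma inj_P2: "inj_on (\<lambda>t. {{1::nat,2},t}) Tb"
proof (rule inj_on_inverseI)
  fix t assume "t \<in> Tb"
  thus "\<Union>{{1::nat,2},t} - {1,2} = t" unfolding Tb_def by (elim insertE emptyE) auto
qed

lemma inj_P4: "inj_on (\<lambda>(k,t). {{2::nat,k},{0,1},t}) ({6..<n} \<times> Tb)"
proof (rule inj_on_inverseI)
  fix x assume "x \<in> {6..<n} \<times> Tb"
  then obtain k t where x: "x = (k,t)" "6 \<le> k" "t \<in> Tb" by auto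
  have "\<Union>{{2::nat,k},{0,1},t} - {0,1,2,3,4,5} = {k}" "\<Union>{{2::nat,k},{0,1},t} \<inter> {3,4,5} = t"
    using x(2,3) unfolding Tb_def by (elim insertE emptyE; auto)+
  thus "(\<lambda>M. (the_elem (\<Union>M - {0,1,2,3,4,5}), \<Union>M \<inter> {3,4,5})) ((\<lambda>(k,t). {{2::nat,k},{0,1},t}) x) = x"
    using x by simp
qed

lemma card_P1: "card P1 = 3" unfolding P1_def using card_image[OF inj_P1] card_Tb by simp
lemma card_P2: "card P2 = 3" unfolding P2_def using card_image[OF inj_P2] card_Tb by simp
lemma card_P4: "card (P4 n) = 3 * (n - 6)" unfolding P4_def using card_image[OF inj_P4] card_Tb
  by (simp add: card_cartesian_product)

lemma P12_disj: "P1 \<inter> P2 = {}"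
proof -
  have "\<forall>M\<in>P1. {0,2} \<in> M" unfolding P1_def by auto
  moreover have "\<forall>M\<in>P2. {0,2} \<notin> M" unfolding P2_def Tb_def by (auto simp: doubleton_eq_iff)
  ultimately show ?thesis by blast
qed

lemma P34_disj: "P3 \<inter> P4 n = {}"
proof -
  have "\<forall>M\<in>P3. {2,3} \<in> M" unfolding P3_def by auto
  moreover have "\<forall>M\<in>P4 n. {2,3} \<notin> M" unfolding P4_def Tb_def by (auto simp: doubleton_eq_iff)
  ultimately show ?thesis by blast
qed

lemma card_el12: "M \<in> P1 \<union> P2 \<Longrightarrow> card M = 2"
  unfolding P1_def P2_def Tb_def by (auto simp: doubleton_eq_iff)

lemma card_el34: "M \<in> P3 \<union> P4 n \<Longrightarrow> card M = 3"
  unfolding P3_def P4_def Tb_def by (auto simp: doubleton_eq_iff)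

lemma avm_T:
  assumes n: "6 < n"
  shows "avm (T1_33_edges n) = (9 * real n - 39) / (3 * real n - 11)"
proof -
  have fin: "finite P1" "finite P2" "finite P3" "finite (P4 n)"
    unfolding P1_def P2_def P3_def P4_def Tb_def by auto
  have c12: "card (P1 \<union> P2) = 6" using card_Un_disjoint[OF fin(1,2) P12_disj] card_P1 card_P2 by simp
  have c34: "card (P3 \<union> P4 n) = 1 + 3 * (n - 6)"
    using card_Un_disjoint[OF fin(3,4) P34_disj] card_P4 by (simp add: P3_def)
  have d: "(P1 \<union> P2) \<inter> (P3 \<union> P4 n) = {}" using card_el12 card_el34 by fastforce
  have eq: "P1 \<union> P2 \<union> P3 \<union> P4 n = (P1 \<union> P2) \<union> (P3 \<union> P4 n)" by blast
  have N: "card (maximal_matchings (T1_33_edges n)) = 7 + 3 * (n - 6)"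
    unfolding MMT[OF n] eq using card_Un_disjoint[of "P1 \<union> P2" "P3 \<union> P4 n"] fin d c12 c34 by simp
  have S: "(\<Sum>M\<in>maximal_matchings (T1_33_edges n). real (card M)) = 12 + 3 * (1 + 3 * real (n - 6))"
  proof -
    have "(\<Sum>M\<in>maximal_matchings (T1_33_edges n). real (card M)) =
       (\<Sum>M\<in>P1 \<union> P2. real (card M)) + (\<Sum>M\<in>P3 \<union> P4 n. real (card M))"
      unfolding MMT[OF n] eq using fin d by (intro sum.union_disjoint) auto
    also have "(\<Sum>M\<in>P1 \<union> P2. real (card M)) = (\<Sum>M\<in>P1 \<union> P2. 2)"
      using card_el12 by (intro sum.cong) auto
    also have "(\<Sum>M\<in>P3 \<union> P4 n. real (card M)) = (\<Sum>M\<in>P3 \<union> P4 n. 3)"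
      using card_el34 by (intro sum.cong) auto
    finally show ?thesis using c12 c34 by simp
  qed
  have r: "real (n - 6) = real n - 6" using n by simp
  show ?thesis unfolding avm_def N S using r n by (simp add: field_simps)
qed

lemma sg_card2: "simple_graph V E \<Longrightarrow> \<forall>e\<in>E. card e = 2"
  unfolding simple_graph_def by fastforce

lemma sg_ne: "simple_graph V E \<Longrightarrow> \<forall>e\<in>E. e \<noteq> {}"
  unfolding simple_graph_def by fastforce

lemma sg_sub: "simple_graph V E \<Longrightarrow> e \<in> E \<Longrightarrow> e \<subseteq> V"
  unfolding simple_graph_def by fastforce

lemma mm_exists:
  assumes "finite E"
  shows "\<exists>M. maximal_matching E M"
proof -
  let ?A = "{M. matching E M}"
  have "?A \<subseteq> Pow E" unfolding matching_def by blast
  hence "finite ?A" using assms finite_subset by blast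
  moreover have "{} \<in> ?A" unfolding matching_def by simp
  ultimately obtain m where "m \<in> ?A" "\<forall>b\<in>?A. m \<le> b \<longrightarrow> m = b"
    using finite_has_maximal[of ?A] by blast
  thus ?thesis unfolding maximal_matching_def by auto
qed

lemma mm_finite: "finite E \<Longrightarrow> finite (maximal_matchings E)"
proof -
  assume "finite E"
  moreover have "maximal_matchings E \<subseteq> Pow E"
    unfolding maximal_matchings_def maximal_matching_def matching_def by blast
  ultimately show ?thesis using finite_subset by blast
qed

lemma two_of_three:
  assumes "a1 \<noteq> a2" "a2 \<noteq> a3" "a1 \<noteq> a3"
    and "a1 \<in> U \<or> a2 \<in> U" "a2 \<in> U \<or> a3 \<in> U" "a1 \<in> U \<or> a3 \<in> U"
  obtains x y where "x \<noteq> y" "x \<in> U" "y \<in> U" "x \<in> {a1,a2,a3}" "y \<in> {a1,a2,a3}"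
  using assms by blast

lemma two_triangles:
  assumes mm: "maximal_matching E M" and c2: "\<forall>e\<in>E. card e = 2" and fE: "finite E"
    and e: "{a1,a2} \<in> E" "{a2,a3} \<in> E" "{a1,a3} \<in> E" "{b1,b2} \<in> E" "{b2,b3} \<in> E" "{b1,b3} \<in> E"
    and d: "distinct [a1,a2,a3,b1,b2,b3]"
  shows "2 \<le> card M" "card M = 2 \<Longrightarrow> \<Union>M \<subseteq> {a1,a2,a3,b1,b2,b3}"
proof -
  have ne: "\<forall>e\<in>E. e \<noteq> {}" using c2 by fastforce
  have m: "matching E M" and cov: "\<forall>e\<in>E. \<exists>f\<in>M. e \<inter> f \<noteq> {}"
    using mm unfolding mm_crit[OF ne] by blast+
  have fM: "finite M" using m fE unfolding matching_def using finite_subset by blast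
  have cU: "card (\<Union>M) = 2 * card M" using card_union_matching[OF m c2 fM] .
  have fU: "finite (\<Union>M)"
  proof (rule finite_Union[OF fM])
    fix A assume "A \<in> M"
    hence "card A = 2" using m c2 unfolding matching_def by blast
    thus "finite A" by (intro card_ge_0_finite) simp
  qed
  have covU: "x \<in> \<Union>M \<or> y \<in> \<Union>M" if "{x,y} \<in> E" for x y
  proof -
    have "\<exists>f\<in>M. {x,y} \<inter> f \<noteq> {}" using cov that by (rule bspec)
    then obtain f where f: "f \<in> M" "{x,y} \<inter> f \<noteq> {}" by (rule bexE)
    hence "x \<in> f \<or> y \<in> f" by blast
    thus ?thesis using f(1) by blast
  qed
  obtain x1 x2 where x: "x1 \<noteq> x2" "x1 \<in> \<Union>M" "x2 \<in> \<Union>M" "x1 \<in> {a1,a2,a3}" "x2 \<in> {a1,a2,a3}"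
    using two_of_three[of a1 a2 a3 "\<Union>M"] covU[OF e(1)] covU[OF e(2)] covU[OF e(3)] d by auto
  obtain y1 y2 where y: "y1 \<noteq> y2" "y1 \<in> \<Union>M" "y2 \<in> \<Union>M" "y1 \<in> {b1,b2,b3}" "y2 \<in> {b1,b2,b3}"
    using two_of_three[of b1 b2 b3 "\<Union>M"] covU[OF e(4)] covU[OF e(5)] covU[OF e(6)] d by auto
  have S: "{x1,x2,y1,y2} \<subseteq> \<Union>M" using x y by blast
  have xy: "x1 \<noteq> y1" "x1 \<noteq> y2" "x2 \<noteq> y1" "x2 \<noteq> y2" using x(4,5) y(4,5) d by auto
  have cS: "card {x1,x2,y1,y2} = 4" using x(1) y(1) xy by simp
  have "4 \<le> card (\<Union>M)" using card_mono[OF fU S] cS by simp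
  thus "2 \<le> card M" using cU by simp
  assume "card M = 2"
  hence "card (\<Union>M) = card {x1,x2,y1,y2}" using cU cS by simp
  hence "{x1,x2,y1,y2} = \<Union>M" using card_subset_eq[OF fU S] by simp
  thus "\<Union>M \<subseteq> {a1,a2,a3,b1,b2,b3}" using x y by blast
qed

definition pdisj :: "'a set set \<Rightarrow> bool" where
  "pdisj M \<longleftrightarrow> (\<forall>e1\<in>M. \<forall>e2\<in>M. e1 \<noteq> e2 \<longrightarrow> e1 \<inter> e2 = {})"

lemma pd3:
  assumes "distinct [x1,x2,x3,x4,x5,x6]"
  shows "pdisj {{x1,x2},{x3,x4},{x5,x6}}" "card {{x1,x2},{x3,x4},{x5,x6}} = 3"
    "\<Union>{{x1,x2},{x3,x4},{x5,x6}} = {x1,x2,x3,x4,x5,x6}"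
  using assms unfolding pdisj_def by (auto simp: doubleton_eq_iff)

lemma pd4:
  assumes "distinct [x1,x2,x3,x4,x5,x6,x7,x8]"
  shows "pdisj {{x1,x2},{x3,x4},{x5,x6},{x7,x8}}" "card {{x1,x2},{x3,x4},{x5,x6},{x7,x8}} = 4"
    "\<Union>{{x1,x2},{x3,x4},{x5,x6},{x7,x8}} = {x1,x2,x3,x4,x5,x6,x7,x8}"
  using assms unfolding pdisj_def by (auto simp: doubleton_eq_iff)

lemma card4le: "card {w,x,y,z} \<le> 4"
  by (auto simp: card_insert_if)

definition cc :: "nat \<Rightarrow> real" where "cc n = (9 * real n - 39) / (3 * real n - 11)"

lemma cover_Union': "(\<forall>e\<in>E. \<exists>f\<in>M. e \<inter> f \<noteq> {}) \<longleftrightarrow> (\<forall>e\<in>E. e \<inter> \<Union>M \<noteq> {})"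
  by blast

lemma core_struct:
  fixes V :: "'a set" and E :: "'a set set"
  assumes n7: "n \<ge> 7" and sg: "simple_graph V E" and con: "connected_graph V E"
    and cV: "card V = n" and cE: "card E = n + 1"
    and dist: "distinct [a,b,c,u,d,f,g]" and inV: "{a,b,c,u,d,f,g} \<subseteq> V"
    and eab: "{a,b} \<in> E" and ebc: "{b,c} \<in> E" and eac: "{a,c} \<in> E" and ecu: "{c,u} \<in> E"
    and eud: "{u,d} \<in> E" and edf: "{d,f} \<in> E" and efg: "{f,g} \<in> E" and edg: "{d,g} \<in> E"
    and cov0: "\<forall>e\<in>E. e \<inter> {a,c,d,f} \<noteq> {}"
  shows "\<exists>cf. (\<forall>x\<in>V - {a,b,c,u,d,f,g}. cf x \<in> {a,c,d,f} \<and> {x, cf x} \<in> E) \<and>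
     E = {{a,b},{b,c},{a,c},{c,u},{u,d},{d,f},{f,g},{d,g}} \<union> (\<lambda>x. {x, cf x}) ` (V - {a,b,c,u,d,f,g})"
proof -
  define Cv where "Cv = {a,b,c,u,d,f,g}"
  define U0 where "U0 = {a,c,d,f}"
  define Ce where "Ce = {{a,b},{b,c},{a,c},{c,u},{u,d},{d,f},{f,g},{d,g}}"
  have fV: "finite V" using sg unfolding simple_graph_def by blast
  have fE: "finite E" using cE by (intro card_ge_0_finite) simp
  have U0Cv: "U0 \<subseteq> Cv" unfolding U0_def Cv_def by blast
  have nbr: "\<exists>y. {x,y} \<in> E" if x: "x \<in> V - Cv" for x
  proof -
    have "a \<in> V" using inV by blast
    hence r: "(x,a) \<in> (adj_rel E)\<^sup>*" using con x unfolding connected_graph_def by blast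
    have "x \<noteq> a" using x unfolding Cv_def by blast
    from r show ?thesis
    proof (cases rule: converse_rtranclE)
      case base thus ?thesis using \<open>x \<noteq> a\<close> by simp
    next
      case (step y) thus ?thesis unfolding adj_rel_def by blast
    qed
  qed
  have nbU: "y \<in> U0" if "x \<notin> U0" "{x,y} \<in> E" for x y
  proof -
    have "{x,y} \<inter> U0 \<noteq> {}" using cov0 that(2) unfolding U0_def by (rule bspec)
    thus ?thesis using that(1) by blast
  qed
  define cf where "cf x = (SOME y. {x,y} \<in> E)" for x
  have cfE: "{x, cf x} \<in> E" if "x \<in> V - Cv" for x
    unfolding cf_def using nbr[OF that] by (rule someI_ex)
  have cfU: "cf x \<in> U0" if "x \<in> V - Cv" for x
    using nbU[OF _ cfE[OF that]] that U0Cv by blast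
  define LE where "LE = (\<lambda>x. {x, cf x}) ` (V - Cv)"
  have inj: "inj_on (\<lambda>x. {x, cf x}) (V - Cv)"
  proof (rule inj_onI)
    fix x x' assume x: "x \<in> V - Cv" and x': "x' \<in> V - Cv" and eq: "{x, cf x} = {x', cf x'}"
    have "x \<in> {x', cf x'}" using eq by blast
    moreover have "x \<noteq> cf x'" using cfU[OF x'] U0Cv x by blast
    ultimately show "x = x'" by blast
  qed
  have cCv: "card Cv = 7" unfolding Cv_def using dist by simp
  have cLE: "card LE = n - 7"
    unfolding LE_def card_image[OF inj] using card_Diff_subset[of Cv V] inV cCv cV fV
    unfolding Cv_def by (simp add: finite_subset)
  have cCe: "card Ce = 8" unfolding Ce_def using dist by (auto simp: card_insert_if doubleton_eq_iff)
  have CeCv: "e \<subseteq> Cv" if "e \<in> Ce" for e using that unfolding Ce_def Cv_def by blast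
  have LEn: "\<exists>x. x \<in> e \<and> x \<notin> Cv" if "e \<in> LE" for e using that unfolding LE_def by blast
  have dj: "Ce \<inter> LE = {}" using CeCv LEn by blast
  have sub: "Ce \<union> LE \<subseteq> E" using cfE unfolding Ce_def LE_def
    using eab ebc eac ecu eud edf efg edg by blast
  have fLE: "finite LE" using fE sub finite_subset by blast
  have fCe: "finite Ce" unfolding Ce_def by simp
  have "card (Ce \<union> LE) = n + 1" using card_Un_disjoint[OF fCe fLE dj] cCe cLE n7 by simp
  hence "Ce \<union> LE = E" using card_subset_eq[OF fE sub] cE by simp
  show ?thesis
  proof (intro exI[of _ cf] conjI ballI)
    fix x assume "x \<in> V - {a,b,c,u,d,f,g}"
    hence x: "x \<in> V - Cv" unfolding Cv_def .
    show "cf x \<in> {a,c,d,f}" using cfU[OF x] unfolding U0_def .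
    show "{x, cf x} \<in> E" using cfE[OF x] .
  next
    show "E = {{a,b},{b,c},{a,c},{c,u},{u,d},{d,f},{f,g},{d,g}} \<union> (\<lambda>x. {x, cf x}) ` (V - {a,b,c,u,d,f,g})"
      using \<open>Ce \<union> LE = E\<close> unfolding Ce_def LE_def Cv_def by simp
  qed
qed

lemma cc_bounds: "7 \<le> n \<Longrightarrow> 2 < cc n \<and> cc n < 3"
proof -
  assume n: "7 \<le> n"
  hence p: "3 * real n - 11 > 0" by simp
  have "2 < cc n" unfolding cc_def using p n by (simp add: field_simps)
  moreover have "cc n < 3" unfolding cc_def using p n by (simp add: field_simps)
  ultimately show ?thesis by simp
qed

lemma final_arith:
  assumes n: "7 \<le> n"
  shows "4 * (2 - cc n) + (if n = 7 then 3 else 2) * (3 - cc n) + (real n - 7) * (4 - cc n) > 0"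
proof (cases "n = 7")
  case True thus ?thesis unfolding cc_def by simp
next
  case False
  hence n8: "real n \<ge> 8" using n by simp
  have p: "3 * real n - 11 > 0" using n by simp
  have key: "(real n - 8) * (3 * real n - 14) + 3 > 0"
    using n8 by (intro add_nonneg_pos mult_nonneg_nonneg) auto
  have e1: "2 - cc n = (17 - 3 * real n) / (3 * real n - 11)"
    unfolding cc_def using p by (simp add: field_simps)
  have e2: "3 - cc n = 6 / (3 * real n - 11)"
    unfolding cc_def using p by (simp add: field_simps)
  have e3: "4 - cc n = (3 * real n - 5) / (3 * real n - 11)"
    unfolding cc_def using p by (simp add: field_simps)
  have eq1: "4 * (2 - cc n) + 2 * (3 - cc n) + (real n - 7) * (4 - cc n) =
        (4 * (17 - 3 * real n) + 2 * 6 + (real n - 7) * (3 * real n - 5)) / (3 * real n - 11)"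
    unfolding e1 e2 e3 by (simp only: times_divide_eq_right add_divide_distrib)
  have eq2: "4 * (17 - 3 * real n) + 2 * 6 + (real n - 7) * (3 * real n - 5) = (real n - 8) * (3 * real n - 14) + 3"
    by (simp add: algebra_simps)
  have "((real n - 8) * (3 * real n - 14) + 3) / (3 * real n - 11) > 0" using key p by simp
  hence "4 * (2 - cc n) + 2 * (3 - cc n) + (real n - 7) * (4 - cc n) > 0"
    unfolding eq1 eq2 .
  thus ?thesis using False by simp
qed

lemma core_case:
  fixes V :: "'a set" and E :: "'a set set"
  assumes n7: "n \<ge> 7" and sg: "simple_graph V E" and con: "connected_graph V E"
    and cV: "card V = n" and cE: "card E = n + 1"
    and dist: "distinct [a,b,c,u,d,f,g]" and inV: "{a,b,c,u,d,f,g} \<subseteq> V"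
    and eab: "{a,b} \<in> E" and ebc: "{b,c} \<in> E" and eac: "{a,c} \<in> E" and ecu: "{c,u} \<in> E"
    and eud: "{u,d} \<in> E" and edf: "{d,f} \<in> E" and efg: "{f,g} \<in> E" and edg: "{d,g} \<in> E"
    and cov0: "\<forall>e\<in>E. e \<inter> {a,c,d,f} \<noteq> {}"
  shows "(\<Sum>M\<in>maximal_matchings E. (real (card M) - cc n)) > 0"
proof -
  define Cv where "Cv = {a,b,c,u,d,f,g}"
  define U0 where "U0 = {a,c,d,f}"
  define Ce where "Ce = {{a,b},{b,c},{a,c},{c,u},{u,d},{d,f},{f,g},{d,g}}"
  define MMs where "MMs = maximal_matchings E"
  obtain cf where H: "(\<forall>x\<in>V - {a,b,c,u,d,f,g}. cf x \<in> {a,c,d,f} \<and> {x, cf x} \<in> E) \<and>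
     E = {{a,b},{b,c},{a,c},{c,u},{u,d},{d,f},{f,g},{d,g}} \<union> (\<lambda>x. {x, cf x}) ` (V - {a,b,c,u,d,f,g})"
    using core_struct[OF assms] ..
  have cfP: "\<forall>x\<in>V - Cv. cf x \<in> U0 \<and> {x, cf x} \<in> E"
    unfolding Cv_def U0_def using conjunct1[OF H] .
  have Eeq: "E = Ce \<union> (\<lambda>x. {x, cf x}) ` (V - Cv)"
    unfolding Cv_def Ce_def using conjunct2[OF H] .
  have fV: "finite V" using sg unfolding simple_graph_def by blast
  have fE: "finite E" using cE by (intro card_ge_0_finite) simp
  have c2: "\<forall>e\<in>E. card e = 2" using sg_card2[OF sg] .
  have ne: "\<forall>e\<in>E. e \<noteq> {}" using sg_ne[OF sg] .
  have fMM: "finite MMs" unfolding MMs_def using mm_finite[OF fE] .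
  have crit: "maximal_matching E M \<longleftrightarrow> M \<subseteq> E \<and> pdisj M \<and> (\<forall>e\<in>E. e \<inter> \<Union>M \<noteq> {})" for M
    unfolding mm_crit[OF ne] matching_def pdisj_def cover_Union' by (simp only: conj_assoc)
  have mmU0: "M \<in> MMs" if "M \<subseteq> E" "pdisj M" "U0 \<subseteq> \<Union>M" for M
  proof -
    have "\<forall>e\<in>E. e \<inter> \<Union>M \<noteq> {}"
    proof
      fix e assume "e \<in> E"
      hence "e \<inter> U0 \<noteq> {}" using cov0 unfolding U0_def by blast
      thus "e \<inter> \<Union>M \<noteq> {}" using that(3) by blast
    qed
    thus ?thesis unfolding MMs_def maximal_matchings_def using crit that by blast
  qed
  have U0Cv: "U0 \<subseteq> Cv" unfolding U0_def Cv_def by blast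
  have xd: "distinct [x,a,b,c,u,d,f,g]" if "x \<in> V - Cv" for x
    using that dist unfolding Cv_def by auto
  define PM where "PM y = (if y = a then {{b,c},{u,d},{f,g}} else if y = c then {{a,b},{u,d},{f,g}}
      else if y = d then {{a,b},{c,u},{f,g}} else {{a,b},{c,u},{d,g}})" for y
  define MX where "MX x = insert {x, cf x} (PM (cf x))" for x
  have MXp: "MX x \<subseteq> E \<and> pdisj (MX x) \<and> card (MX x) = 4 \<and> \<Union>(MX x) = insert x Cv"
    if x: "x \<in> V - Cv" for x
  proof -
    have y: "cf x \<in> U0" and ex: "{x, cf x} \<in> E" using cfP x by auto
    have dx: "distinct [x,a,b,c,u,d,f,g]" using xd[OF x] .
    have nq: "c \<noteq> a" "d \<noteq> a" "d \<noteq> c" "f \<noteq> a" "f \<noteq> c" "f \<noteq> d" using dist by auto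
    consider "cf x = a" | "cf x = c" | "cf x = d" | "cf x = f" using y unfolding U0_def by blast
    thus ?thesis
    proof cases
      case 1
      have M: "MX x = {{x,a},{b,c},{u,d},{f,g}}" unfolding MX_def PM_def using 1 by simp
      have "distinct [x,a,b,c,u,d,f,g]" using dx by simp
      note P = pd4[OF this]
      show ?thesis unfolding M using P ex 1 ebc eud efg unfolding Cv_def by auto
    next
      case 2
      have M: "MX x = {{x,c},{a,b},{u,d},{f,g}}" unfolding MX_def PM_def using 2 nq by simp
      have "distinct [x,c,a,b,u,d,f,g]" using dx by auto
      note P = pd4[OF this]
      show ?thesis unfolding M using P ex 2 eab eud efg unfolding Cv_def by auto
    next
      case 3
      have M: "MX x = {{x,d},{a,b},{c,u},{f,g}}" unfolding MX_def PM_def using 3 nq by simp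
      have "distinct [x,d,a,b,c,u,f,g]" using dx by auto
      note P = pd4[OF this]
      show ?thesis unfolding M using P ex 3 eab ecu efg unfolding Cv_def by auto
    next
      case 4
      have M: "MX x = {{x,f},{a,b},{c,u},{d,g}}" unfolding MX_def PM_def using 4 nq by simp
      have "distinct [x,f,a,b,c,u,d,g]" using dx by auto
      note P = pd4[OF this]
      show ?thesis unfolding M using P ex 4 eab ecu edg unfolding Cv_def by auto
    qed
  qed
  define F4 where "F4 = MX ` (V - Cv)"
  have F4MM: "F4 \<subseteq> MMs"
  proof
    fix M assume "M \<in> F4"
    then obtain x where x: "x \<in> V - Cv" and M: "M = MX x" unfolding F4_def by blast
    show "M \<in> MMs" unfolding M using MXp[OF x] U0Cv by (intro mmU0) auto
  qed
  have injMX: "inj_on MX (V - Cv)"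
  proof (rule inj_onI)
    fix x x' assume x: "x \<in> V - Cv" and x': "x' \<in> V - Cv" and eq: "MX x = MX x'"
    have "insert x Cv = insert x' Cv" using MXp[OF x] MXp[OF x'] eq by simp
    thus "x = x'" using x x' by blast
  qed
  have cCv: "card Cv = 7" unfolding Cv_def using dist by simp
  have cF4: "card F4 = n - 7"
    unfolding F4_def card_image[OF injMX] using card_Diff_subset[of Cv V] inV cCv cV fV
    unfolding Cv_def by (simp add: finite_subset)
  have F4c: "card M = 4" if "M \<in> F4" for M using that MXp unfolding F4_def by auto
  define A1 where "A1 = {{a,b},{c,u},{d,f}}"
  define A2 where "A2 = {{a,c},{u,d},{f,g}}"
  define A3 where "A3 = {{b,c},{u,d},{f,g}}"
  have d1: "distinct [a,b,c,u,d,f]" and d2: "distinct [a,c,u,d,f,g]" and d3: "distinct [b,c,u,d,f,g]"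
    using dist by auto
  have A1u: "\<Union>A1 = {a,b,c,u,d,f}" unfolding A1_def using pd3(3)[OF d1] .
  have A2u: "\<Union>A2 = {a,c,u,d,f,g}" unfolding A2_def using pd3(3)[OF d2] .
  have A1m: "A1 \<in> MMs"
  proof (rule mmU0)
    show "A1 \<subseteq> E" unfolding A1_def using eab ecu edf by simp
    show "pdisj A1" unfolding A1_def using pd3(1)[OF d1] .
    show "U0 \<subseteq> \<Union>A1" unfolding A1u U0_def by blast
  qed
  have A2m: "A2 \<in> MMs"
  proof (rule mmU0)
    show "A2 \<subseteq> E" unfolding A2_def using eac eud efg by simp
    show "pdisj A2" unfolding A2_def using pd3(1)[OF d2] .
    show "U0 \<subseteq> \<Union>A2" unfolding A2u U0_def by blast
  qed
  have A1p: "A1 \<in> MMs" "card A1 = 3" "\<Union>A1 = {a,b,c,u,d,f}"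
    using A1m A1u pd3(2)[OF d1] unfolding A1_def by simp_all
  have A2p: "A2 \<in> MMs" "card A2 = 3" "\<Union>A2 = {a,c,u,d,f,g}"
    using A2m A2u pd3(2)[OF d2] unfolding A2_def by simp_all
  have A3p: "card A3 = 3" "\<Union>A3 = {b,c,u,d,f,g}" using pd3[OF d3] unfolding A3_def by auto
  have A3MM: "A3 \<in> MMs" if n: "n = 7"
  proof -
    have "Cv = V" using card_subset_eq[OF fV, of Cv] inV cCv cV n unfolding Cv_def by simp
    have "\<forall>e\<in>E. e \<inter> \<Union>A3 \<noteq> {}"
    proof
      fix e assume e: "e \<in> E"
      show "e \<inter> \<Union>A3 \<noteq> {}"
      proof
        assume "e \<inter> \<Union>A3 = {}"
        moreover have "e \<subseteq> Cv" using sg_sub[OF sg e] \<open>Cv = V\<close> by simp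
        ultimately have "e \<subseteq> {a}" unfolding A3p Cv_def by blast
        hence "card e \<le> 1" using card_mono[of "{a}" e] by simp
        thus False using c2 e by simp
      qed
    qed
    moreover have "A3 \<subseteq> E" unfolding A3_def using ebc eud efg by simp
    ultimately show ?thesis unfolding MMs_def maximal_matchings_def crit A3_def
      using pd3(1)[OF d3] by simp
  qed
  have A12: "A1 \<noteq> A2" using A1p(3) A2p(3) dist by auto
  have A13: "A1 \<noteq> A3" using A1p(3) A3p(2) dist by auto
  have A23: "A2 \<noteq> A3" using A2p(3) A3p(2) dist by auto
  define F3 where "F3 = (if n = 7 then {A1,A2,A3} else {A1,A2})"
  have F3MM: "F3 \<subseteq> MMs" unfolding F3_def using A1p A2p A3MM by auto
  have cF3: "card F3 = (if n = 7 then 3 else 2)" unfolding F3_def using A12 A13 A23 by auto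
  have F3c: "card M = 3" if "M \<in> F3" for M using that A1p A2p A3p unfolding F3_def
    by (auto split: if_splits)
  define S2 where "S2 = {M\<in>MMs. card M = 2}"
  define Cand where "Cand = {{{a,c},{d,f}}, {{a,c},{d,g}}, {{b,c},{d,f}}, {{b,c},{d,g}}}"
  have S2C: "S2 \<subseteq> Cand"
  proof
    fix M assume "M \<in> S2"
    hence mm: "maximal_matching E M" and cM: "card M = 2" unfolding S2_def MMs_def maximal_matchings_def by auto
    have dd: "distinct [a,b,c,d,f,g]" using dist by auto
    have T6: "\<Union>M \<subseteq> {a,b,c,d,f,g}"
      using two_triangles(2)[OF mm c2 fE eab ebc eac edf efg edg dd cM] .
    have m: "M \<subseteq> E" "pdisj M" and cv: "\<forall>e\<in>E. e \<inter> \<Union>M \<noteq> {}" using mm crit by auto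
    have uM: "u \<notin> \<Union>M" using T6 dist by auto
    have inCe: "e \<in> Ce" if "e \<in> M" for e
    proof -
      have "e \<in> E" using that m by blast
      moreover have "e \<subseteq> Cv" using that T6 unfolding Cv_def by blast
      moreover have "e \<notin> (\<lambda>x. {x, cf x}) ` (V - Cv)" using \<open>e \<subseteq> Cv\<close> by blast
      ultimately show ?thesis using Eeq by blast
    qed
    have "{c,u} \<inter> \<Union>M \<noteq> {}" using cv ecu by (rule bspec)
    hence "c \<in> \<Union>M" using uM by blast
    then obtain e1 where e1: "e1 \<in> M" "c \<in> e1" by blast
    have "{u,d} \<inter> \<Union>M \<noteq> {}" using cv eud by (rule bspec)
    hence "d \<in> \<Union>M" using uM by blast
    then obtain e2 where e2: "e2 \<in> M" "d \<in> e2" by blast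
    have e1u: "u \<notin> e1" using uM e1 by blast
    have e2u: "u \<notin> e2" using uM e2 by blast
    have e1c: "e1 = {a,c} \<or> e1 = {b,c}"
      using inCe[OF e1(1)] e1(2) e1u dist unfolding Ce_def by (elim insertE emptyE) auto
    have e2c: "e2 = {d,f} \<or> e2 = {d,g}"
      using inCe[OF e2(1)] e2(2) e2u dist unfolding Ce_def by (elim insertE emptyE) auto
    have "e1 \<noteq> e2" using e1c e2(2) dist by auto
    hence "card {e1,e2} = 2" by simp
    moreover have "{e1,e2} \<subseteq> M" using e1 e2 by blast
    moreover have "finite M" using m fE finite_subset by blast
    ultimately have "M = {e1,e2}" using cM card_subset_eq by metis
    thus "M \<in> Cand" unfolding Cand_def using e1c e2c
      by (elim disjE) (simp_all only: insert_iff simp_thms)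
  qed
  have cS2: "card S2 \<le> 4"
    using card_mono[OF _ S2C] card4le unfolding Cand_def by (meson finite.emptyI finite.insertI order_trans)
  define h where "h M = real (card M) - cc n" for M :: "'a set set"
  have ccb: "2 < cc n" "cc n < 3" using cc_bounds[OF n7] by auto
  have MMc2: "2 \<le> card M" if "M \<in> MMs" for M
    using two_triangles(1)[OF _ c2 fE eab ebc eac edf efg edg] that dist
    unfolding MMs_def maximal_matchings_def by auto
  have S2sub: "S2 \<subseteq> MMs" unfolding S2_def by blast
  have splt: "sum h MMs = sum h S2 + sum h (MMs - S2)"
    using sum.subset_diff[OF S2sub fMM, of h] by simp
  have sS2: "sum h S2 = real (card S2) * (2 - cc n)"
    unfolding h_def S2_def by simp
  have sS2b: "sum h S2 \<ge> 4 * (2 - cc n)"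
  proof -
    have "real (card S2) \<le> 4" using cS2 by simp
    hence "4 * (2 - cc n) \<le> real (card S2) * (2 - cc n)"
      using ccb by (intro mult_right_mono_neg) auto
    thus ?thesis using sS2 by simp
  qed
  have Qsub: "F3 \<union> F4 \<subseteq> MMs - S2" using F3MM F4MM F3c F4c unfolding S2_def by auto
  have fR: "finite (MMs - S2)" using fMM by simp
  have Rnn: "0 \<le> h M" if "M \<in> (MMs - S2) - (F3 \<union> F4)" for M
  proof -
    from that have "M \<in> MMs" "card M \<noteq> 2" unfolding S2_def by auto
    hence "3 \<le> card M" using MMc2 by fastforce
    thus "0 \<le> h M" unfolding h_def using ccb by simp
  qed
  have sR: "sum h (F3 \<union> F4) \<le> sum h (MMs - S2)"
    using sum_mono2[OF fR Qsub Rnn] .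
  have fF3: "finite F3" unfolding F3_def by simp
  have fF4: "finite F4" unfolding F4_def using fV by simp
  have dj34: "F3 \<inter> F4 = {}" using F3c F4c by fastforce
  have sQ: "sum h (F3 \<union> F4) = real (card F3) * (3 - cc n) + real (card F4) * (4 - cc n)"
  proof -
    have "sum h (F3 \<union> F4) = sum h F3 + sum h F4" using sum.union_disjoint[OF fF3 fF4 dj34] .
    also have "sum h F3 = real (card F3) * (3 - cc n)"
      unfolding h_def using F3c by simp
    also have "sum h F4 = real (card F4) * (4 - cc n)"
      unfolding h_def using F4c by simp
    finally show ?thesis .
  qed
  have "real (card F4) = real n - 7" using cF4 n7 by simp
  moreover have "real (card F3) = (if n = 7 then 3 else 2)" using cF3 by simp
  ultimately have "sum h (F3 \<union> F4) = (if n = 7 then 3 else 2) * (3 - cc n) + (real n - 7) * (4 - cc n)"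
    using sQ by simp
  hence "sum h MMs \<ge> 4 * (2 - cc n) + (if n = 7 then 3 else 2) * (3 - cc n) + (real n - 7) * (4 - cc n)"
    using splt sS2b sR by simp
  moreover have "4 * (2 - cc n) + (if n = 7 then 3 else 2) * (3 - cc n) + (real n - 7) * (4 - cc n) > 0"
    using final_arith[OF n7] .
  ultimately have "sum h MMs > 0" by linarith
  thus ?thesis unfolding h_def MMs_def .
qed

lemma avm_gt_of_sum:
  assumes "finite MM" "(\<Sum>M\<in>MM. (real (card M) - c)) > 0"
  shows "(\<Sum>M\<in>MM. real (card M)) / real (card MM) > c"
proof -
  have s: "(\<Sum>M\<in>MM. (real (card M) - c)) = (\<Sum>M\<in>MM. real (card M)) - real (card MM) * c"
    by (simp add: sum_subtractf)
  have "MM \<noteq> {}" using assms(2) by auto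
  hence "real (card MM) > 0" using assms(1) by (simp add: card_gt_0_iff)
  thus ?thesis using assms(2) s by (simp add: pos_less_divide_eq mult.commute)
qed

lemma main_G:
  fixes V :: "'a set" and E :: "'a set set" and n :: nat
    and v1 v2 v3 u w1 w2 w3 :: 'a
  assumes n7: "n \<ge> 7"
    and sg: "simple_graph V E" and con: "connected_graph V E"
    and cV: "card V = n" and cE: "card E = n + 1"
    and dist: "distinct [v1, v2, v3, u, w1, w2, w3]"
    and inV: "{v1, v2, v3, u, w1, w2, w3} \<subseteq> V"
    and e1: "{v1, v2} \<in> E" and e2: "{v2, v3} \<in> E" and e3: "{v1, v3} \<in> E"
    and e4: "{w1, w2} \<in> E" and e5: "{w2, w3} \<in> E" and e6: "{w1, w3} \<in> E"
    and e7: "{v3, u} \<in> E" and e8: "{u, w1} \<in> E"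
  shows "avm E > cc n"
proof -
  define MMs where "MMs = maximal_matchings E"
  have fE: "finite E" using cE by (intro card_ge_0_finite) simp
  have c2: "\<forall>e\<in>E. card e = 2" using sg_card2[OF sg] .
  have ne: "\<forall>e\<in>E. e \<noteq> {}" using sg_ne[OF sg] .
  have fMM: "finite MMs" unfolding MMs_def using mm_finite[OF fE] .
  have dd: "distinct [v1,v2,v3,w1,w2,w3]" using dist by auto
  have ccb: "2 < cc n" "cc n < 3" using cc_bounds[OF n7] by auto
  have "(\<Sum>M\<in>MMs. (real (card M) - cc n)) > 0"
  proof (cases "\<exists>M0\<in>MMs. card M0 = 2")
    case False
    obtain M1 where "maximal_matching E M1" using mm_exists[OF fE] by blast
    hence "MMs \<noteq> {}" unfolding MMs_def maximal_matchings_def by blast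
    moreover have "real (card M) - cc n > 0" if "M \<in> MMs" for M
    proof -
      have "2 \<le> card M" using two_triangles(1)[OF _ c2 fE e1 e2 e3 e4 e5 e6 dd] that
        unfolding MMs_def maximal_matchings_def by blast
      moreover have "card M \<noteq> 2" using False that by blast
      ultimately have "3 \<le> card M" by simp
      thus ?thesis using ccb by simp
    qed
    ultimately show ?thesis using fMM by (intro sum_pos) auto
  next
    case True
    then obtain M0 where M0: "M0 \<in> MMs" "card M0 = 2" by blast
    have mm: "maximal_matching E M0" using M0 unfolding MMs_def maximal_matchings_def by blast
    have T6: "\<Union>M0 \<subseteq> {v1,v2,v3,w1,w2,w3}"
      using two_triangles(2)[OF mm c2 fE e1 e2 e3 e4 e5 e6 dd M0(2)] .
    have m: "matching E M0" and cv: "\<forall>e\<in>E. \<exists>f\<in>M0. e \<inter> f \<noteq> {}"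
      using mm unfolding mm_crit[OF ne] by blast+
    have cvU: "\<forall>e\<in>E. e \<inter> \<Union>M0 \<noteq> {}" using cv unfolding cover_Union' .
    have fM0: "finite M0" using m fE finite_subset unfolding matching_def by blast
    have cU: "card (\<Union>M0) = 4" using card_union_matching[OF m c2 fM0] M0(2) by simp
    have fU: "finite (\<Union>M0)" using cU by (intro card_ge_0_finite) simp
    have uU: "u \<notin> \<Union>M0" using T6 dist by auto
    have h7: "{v3,u} \<inter> \<Union>M0 \<noteq> {}" using cvU e7 by (rule bspec)
    have v3U: "v3 \<in> \<Union>M0" using h7 uU by blast
    have h8: "{u,w1} \<inter> \<Union>M0 \<noteq> {}" using cvU e8 by (rule bspec)
    have w1U: "w1 \<in> \<Union>M0" using h8 uU by blast
    have h1: "{v1,v2} \<inter> \<Union>M0 \<noteq> {}" using cvU e1 by (rule bspec)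
    hence "v1 \<in> \<Union>M0 \<or> v2 \<in> \<Union>M0" by blast
    then obtain p where p: "p \<in> \<Union>M0" "p = v1 \<or> p = v2" by blast
    have h5: "{w2,w3} \<inter> \<Union>M0 \<noteq> {}" using cvU e5 by (rule bspec)
    hence "w2 \<in> \<Union>M0 \<or> w3 \<in> \<Union>M0" by blast
    then obtain q where q: "q \<in> \<Union>M0" "q = w2 \<or> q = w3" by blast
    have S: "{p,v3,w1,q} \<subseteq> \<Union>M0" using p q v3U w1U by blast
    have cS: "card {p,v3,w1,q} = 4" using p(2) q(2) dist by auto
    have U: "\<Union>M0 = {p,v3,w1,q}" using card_subset_eq[OF fU S] cS cU by simp
    have cov0: "\<forall>e\<in>E. e \<inter> {p,v3,w1,q} \<noteq> {}" using cvU unfolding U .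
    have "(\<Sum>M\<in>maximal_matchings E. (real (card M) - cc n)) > 0"
    proof -
      consider "p = v1" "q = w2" | "p = v1" "q = w3" | "p = v2" "q = w2" | "p = v2" "q = w3"
        using p(2) q(2) by blast
      thus ?thesis
      proof cases
        case 1
        show ?thesis
          by (rule core_case[of n V E v1 v2 v3 u w1 w2 w3])
             (use n7 sg con cV cE dist inV e1 e2 e3 e4 e5 e6 e7 e8 cov0 1 in \<open>simp_all add: insert_commute eq_commute\<close>)
      next
        case 2
        show ?thesis
          by (rule core_case[of n V E v1 v2 v3 u w1 w3 w2])
             (use n7 sg con cV cE dist inV e1 e2 e3 e4 e5 e6 e7 e8 cov0 2 in \<open>simp_all add: insert_commute eq_commute\<close>)
      next
        case 3
        show ?thesis
          by (rule core_case[of n V E v2 v1 v3 u w1 w2 w3])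
             (use n7 sg con cV cE dist inV e1 e2 e3 e4 e5 e6 e7 e8 cov0 3 in \<open>simp_all add: insert_commute eq_commute\<close>)
      next
        case 4
        show ?thesis
          by (rule core_case[of n V E v2 v1 v3 u w1 w3 w2])
             (use n7 sg con cV cE dist inV e1 e2 e3 e4 e5 e6 e7 e8 cov0 4 in \<open>simp_all add: insert_commute eq_commute\<close>)
      qed
    qed
    thus ?thesis unfolding MMs_def .
  qed
  thus ?thesis unfolding avm_def MMs_def[symmetric] using avm_gt_of_sum[OF fMM] by blast
qed

theorem lemma4p5:
  fixes V :: "'a set" and E :: "'a set set" and n :: nat
    and v1 v2 v3 u w1 w2 w3 :: 'a
  assumes "n \<ge> 7"
    and "simple_graph V E" and "connected_graph V E"
    and "card V = n" and "card E = n + 1"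
    and "distinct [v1, v2, v3, u, w1, w2, w3]"
    and "{v1, v2, v3, u, w1, w2, w3} \<subseteq> V"
    and "{v1, v2} \<in> E" and "{v2, v3} \<in> E" and "{v1, v3} \<in> E"
    and "{w1, w2} \<in> E" and "{w2, w3} \<in> E" and "{w1, w3} \<in> E"
    and "{v3, u} \<in> E" and "{u, w1} \<in> E"
  shows "avm E > avm (T1_33_edges n)"
proof -
  have n6: "6 < n" using assms(1) by simp
  have "avm (T1_33_edges n) = cc n" using avm_T[OF n6] unfolding cc_def by simp
  moreover have "avm E > cc n" by (rule main_G[OF assms])
  ultimately show ?thesis by simp
qed

end
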